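(* Let $\sigma_0,\sigma_\epsilon>0$, $\theta_0\in\mathbb{R}$, prior $\Theta\sim N(\theta_0,\sigma_0^2)$, signal $X=\Theta+\epsilon$ with $\epsilon\sim\mathrm{Cauchy}(0,\sigma_\epsilon)$ independent of $\Theta$, and let $\theta_1(x)=\mathbb{E}[\Theta\mid X=x]$. Then for large signals the shift is asymptotically $\theta_1(x)-\theta_0\approx\frac{2\sigma_0^2}{x-\theta_0}$, in the sense that $$\lim_{x-\theta_0\to+\infty}(x-\theta_0)\bigl(\theta_1(x)-\theta_0\bigr)=2\sigma_0^2 .$$
   Context: $\mathrm{Cauchy}(\mu,s)$ has density $t\mapsto\frac{1}{\pi s[1+((t-\mu)/s)^2]}$. The posterior mean is $\theta_1(x)=\frac{\int\theta f_\Theta(\theta)l_\epsilon(x-\theta)d\theta}{\int f_\Theta(\theta)l_\epsilon(x-\theta)d\theta}$. *)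

theory Defs
  imports "HOL-Probability.Probability"
begin

definition cauchy_density :: "real \<Rightarrow> real \<Rightarrow> real \<Rightarrow> real" where
  "cauchy_density \<mu> s t = 1 / (pi * s * (1 + ((t - \<mu>) / s)^2))"

text \<open>Posterior mean E[Theta | X = x] for X = Theta + eps, Theta with density fT,
  eps with density le, independent (Bayes formula).\<close>
definition posterior_mean :: "(real \<Rightarrow> real) \<Rightarrow> (real \<Rightarrow> real) \<Rightarrow> real \<Rightarrow> real" where
  "posterior_mean fT le x =
     (\<integral>\<theta>. \<theta> * fT \<theta> * le (x - \<theta>) \<partial>lborel) / (\<integral>\<theta>. fT \<theta> * le (x - \<theta>) \<partial>lborel)"

end

theory Submission imports Defs "HOL-Real_Asymp.Real_Asymp" begin

lemma cauchy_eq: "s > 0 \<Longrightarrow> cauchy_density 0 s t = s / (pi * (s^2 + t^2))"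
proof -
  assume s: "s > 0"
  have p: "s^2+t^2 > 0" using s by (simp add: add_pos_nonneg)
  have "pi * s * (1 + (t/s)^2) = pi*(s^2+t^2)/s" using s by (simp add: field_simps power2_eq_square)
  then show ?thesis unfolding cauchy_density_def using s p by simp
qed

lemma lim1: "(s::real) > 0 \<Longrightarrow> ((\<lambda>y. y^2 * (s / (pi * (s^2 + (y-u)^2)))) \<longlongrightarrow> s / pi) at_top"
  apply real_asymp by (simp add: divide_inverse)

lemma lim2: "(s::real) > 0 \<Longrightarrow> ((\<lambda>y. y^3 * (s / (pi * (s^2 + (y-u)^2)) - s / (pi * (s^2 + y^2)))) \<longlongrightarrow> 2 * u * s / pi) at_top"
  apply real_asymp by (simp add: divide_inverse)

lemma b1: "(s::real) > 0 \<Longrightarrow> y^2 * s^2 \<le> 2 * ((s^2 + u^2) * (s^2 + (y-u)^2))"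
proof -
  assume s: "s > 0"
  have a: "y^2 \<le> 2 * (y-u)^2 + 2 * u^2" using sum_squares_ge_zero[of "y - 2 * u" 0]
    by (simp add: power2_eq_square algebra_simps)
  have b: "s^2 * ((y-u)^2 + u^2) \<le> (s^2 + u^2) * (s^2 + (y-u)^2)"
  proof -
    have "0 \<le> s^4 + u^2 * (y-u)^2" by simp
    moreover have "(s^2 + u^2) * (s^2 + (y-u)^2) - s^2 * ((y-u)^2 + u^2) = s^4 + u^2 * (y-u)^2"
      by (simp add: algebra_simps power2_eq_square power4_eq_xxxx)
    ultimately show ?thesis by linarith
  qed
  have "y^2 * s^2 \<le> (2 * (y-u)^2 + 2 * u^2) * s^2" using a by (simp add: mult_right_mono)
  also have "\<dots> = 2 * (s^2 * ((y-u)^2 + u^2))" by (simp add: algebra_simps)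
  also have "\<dots> \<le> 2 * ((s^2 + u^2) * (s^2 + (y-u)^2))" using b by linarith
  finally show ?thesis .
qed

lemma b1': "(s::real) > 0 \<Longrightarrow> y^2 * (s / (pi * (s^2 + (y-u)^2))) \<le> 2 * (s^2 + u^2) / (pi * s)"
proof -
  assume s: "s > 0"
  define A where "A = s^2 + (y-u)^2"
  have A: "A > 0" unfolding A_def using s by (simp add: add_pos_nonneg)
  have "(y^2 * s^2) / (pi * s * A) = (s * (y^2 * s)) / (s * (pi * A))" by (simp add: algebra_simps power2_eq_square)
  also have "\<dots> = (y^2 * s) / (pi * A)" using s by (rule mult_divide_mult_cancel_left[OF less_imp_neq[symmetric]] )
  finally have e1: "y^2 * (s / (pi * A)) = (y^2 * s^2) / (pi * s * A)" by simp
  have "(y^2 * s^2) / (pi * s * A) \<le> (2 * ((s^2 + u^2) * A)) / (pi * s * A)"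
    using b1[OF s, of y u] s A unfolding A_def by (intro divide_right_mono) auto
  also have "\<dots> = (A * (2 * (s^2 + u^2))) / (A * (pi * s))" by (simp add: algebra_simps)
  also have "\<dots> = 2 * (s^2 + u^2) / (pi * s)" using A by (rule mult_divide_mult_cancel_left[OF less_imp_neq[symmetric]] )
  finally show ?thesis using e1 unfolding A_def by simp
qed

lemma absb: "\<bar>(u::real)\<bar>^3 \<le> u^2 + u^4"
proof -
  have a: "\<bar>u\<bar> \<le> 1 + u^2" using sum_squares_ge_zero[of "\<bar>u\<bar> - 1" 0]
    by (simp add: power2_eq_square algebra_simps)
  have "\<bar>u\<bar>^3 = u^2 * \<bar>u\<bar>" by (simp add: power3_eq_cube power2_eq_square abs_mult_self_eq)
  also have "\<dots> \<le> u^2 * (1 + u^2)" using a by (intro mult_left_mono) auto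
  also have "\<dots> = u^2 + u^4" by (simp add: algebra_simps power4_eq_xxxx power2_eq_square)
  finally show ?thesis .
qed

lemma absb2: "(y::real) > 0 \<Longrightarrow> \<bar>u * (2 * y - u)\<bar> \<le> 2 * y * \<bar>u\<bar> + u^2"
proof -
  assume y: "y > 0"
  have "\<bar>u * (2 * y - u)\<bar> = \<bar>u\<bar> * \<bar>2 * y - u\<bar>" by (simp add: abs_mult)
  also have "\<dots> \<le> \<bar>u\<bar> * (2 * y + \<bar>u\<bar>)" using y by (intro mult_left_mono) auto
  also have "\<dots> = 2 * y * \<bar>u\<bar> + u^2" by (simp add: algebra_simps power2_eq_square abs_mult_self_eq)
  finally show ?thesis .
qed
lemma b2:
  assumes s: "(s::real) > 0" and y: "y \<ge> 1"
  shows "\<bar>u * (y^3 * (s / (pi * (s^2 + (y-u)^2)) - s / (pi * (s^2 + y^2))))\<bar>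
     \<le> 2 / (pi * s) * ((3 * u^2 + u^4) * (s^2 + u^2))"
proof -
  define A where "A = s^2 + (y-u)^2"
  define B where "B = s^2 + y^2"
  have A: "A > 0" unfolding A_def using s by (simp add: add_pos_nonneg)
  have B: "B > 0" unfolding B_def using s by (simp add: add_pos_nonneg)
  have yB: "y^2 \<le> B" unfolding B_def by simp
  have y0: "y > 0" using y by simp
  define P where "P = 2 * u^2 + \<bar>u\<bar>^3"
  have P0: "P \<ge> 0" unfolding P_def by simp
  define X where "X = \<bar>u\<bar> * y^3 * \<bar>u * (2 * y - u)\<bar>"
  have eq: "\<bar>u * (y^3 * (s / (pi * A) - s / (pi * B)))\<bar> = (s / pi) * X / (A * B)"
  proof -
    have "u * (y^3 * (s / (pi * A) - s / (pi * B))) = (s / pi) * (u * y^3 * (B - A)) / (A * B)"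
      using A B by (simp add: field_simps)
    also have "B - A = u * (2 * y - u)" unfolding A_def B_def by (simp add: algebra_simps power2_eq_square)
    finally show ?thesis unfolding X_def using A B s y0 by (simp add: abs_mult)
  qed
  have X1: "X \<le> P * y^2 * y^2"
  proof -
    have "X \<le> \<bar>u\<bar> * y^3 * (2 * y * \<bar>u\<bar> + u^2)" unfolding X_def using y0 absb2[OF y0, of u]
      by (intro mult_left_mono) auto
    also have "\<dots> = \<bar>u\<bar> * y^2 * (2 * y^2 * \<bar>u\<bar> + y * u^2)" by (simp add: algebra_simps power2_eq_square power3_eq_cube)
    also have "\<dots> \<le> \<bar>u\<bar> * y^2 * (2 * y^2 * \<bar>u\<bar> + y^2 * u^2)"
    proof -
      have "y \<le> y^2" using y by (simp add: power2_eq_square)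
      hence "y * u^2 \<le> y^2 * u^2" by (simp add: mult_right_mono)
      thus ?thesis by (intro mult_left_mono) auto
    qed
    also have "\<dots> = P * y^2 * y^2" unfolding P_def by (simp add: algebra_simps power2_eq_square power3_eq_cube abs_mult_self_eq)
    finally show ?thesis .
  qed
  have X2: "s^2 * X \<le> P * (2 * ((s^2 + u^2) * A)) * B"
  proof -
    have "s^2 * X \<le> s^2 * (P * y^2 * y^2)" using X1 by (simp add: mult_left_mono)
    also have "\<dots> = P * (y^2 * s^2) * y^2" by (simp add: algebra_simps)
    also have "\<dots> \<le> P * (2 * ((s^2 + u^2) * A)) * B"
    proof (rule mult_mono)
      show "P * (y^2 * s^2) \<le> P * (2 * ((s^2 + u^2) * A))"
        using b1[OF s, of y u] P0 unfolding A_def by (rule mult_left_mono)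
      show "y^2 \<le> B" by (rule yB)
      show "0 \<le> P * (2 * ((s^2 + u^2) * A))" using P0 A by simp
    qed simp
    finally show ?thesis .
  qed
  have "(s / pi) * X / (A * B) = (s^2 * X) / (pi * s * A * B)" using s
    by (simp add: power2_eq_square)
  also have "\<dots> \<le> (P * (2 * ((s^2 + u^2) * A)) * B) / (pi * s * A * B)"
    using X2 s A B by (intro divide_right_mono) auto
  also have "\<dots> = 2 / (pi * s) * (P * (s^2 + u^2))" using A B s by (simp add: field_simps)
  also have "\<dots> \<le> 2 / (pi * s) * ((3 * u^2 + u^4) * (s^2 + u^2))"
  proof -
    have "P \<le> 3 * u^2 + u^4" unfolding P_def using absb[of u] by simp
    thus ?thesis using s by (intro mult_left_mono mult_right_mono) auto
  qed
  finally show ?thesis using eq unfolding A_def B_def by simp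
qed
lemma intpoly:
  assumes "(\<sigma>::real) > 0"
  shows "integrable lborel (\<lambda>u. normal_density 0 \<sigma> u * (K * ((p + q * u^2 + r * u^4) * (v + u^2))))"
proof -
  have m: "integrable lborel (\<lambda>u. normal_density 0 \<sigma> u * u^k)" for k
    using integrable_normal_moment[OF assms, of 0 k] by simp
  have "integrable lborel (\<lambda>u. normal_density 0 \<sigma> u * u^0 * (K * p * v) + normal_density 0 \<sigma> u * u^2 * (K * (p + q * v))
     + normal_density 0 \<sigma> u * u^4 * (K * (q + r * v)) + normal_density 0 \<sigma> u * u^6 * (K * r))"
    by (intro Bochner_Integration.integrable_add integrable_mult_left m)
  moreover have "(\<lambda>u. normal_density 0 \<sigma> u * u^0 * (K * p * v) + normal_density 0 \<sigma> u * u^2 * (K * (p + q * v))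
     + normal_density 0 \<sigma> u * u^4 * (K * (q + r * v)) + normal_density 0 \<sigma> u * u^6 * (K * r))
     = (\<lambda>u. normal_density 0 \<sigma> u * (K * ((p + q * u^2 + r * u^4) * (v + u^2))))"
    by (rule ext) algebra
  ultimately show ?thesis by simp
qed

lemma c_bound: "(s::real) > 0 \<Longrightarrow> s / (pi * (s^2 + t^2)) \<le> 1 / (pi * s)"
proof -
  assume s: "s > 0"
  have "s / (pi * (s^2 + t^2)) \<le> s / (pi * s^2)"
    using s by (intro divide_left_mono mult_left_mono mult_pos_pos) (auto simp: add_pos_nonneg)
  also have "\<dots> = 1 / (pi * s)" using s by (simp add: power2_eq_square)
  finally show ?thesis .
qed

theorem mainTheorem7:
  fixes \<sigma>0 \<sigma>\<epsilon> \<theta>0 :: real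
  assumes "\<sigma>0 > 0" and "\<sigma>\<epsilon> > 0"
  shows "((\<lambda>y. y * (posterior_mean (normal_density \<theta>0 \<sigma>0) (cauchy_density 0 \<sigma>\<epsilon>) (\<theta>0 + y) - \<theta>0))
           \<longlongrightarrow> 2 * \<sigma>0^2) at_top"
proof -
  note s0 = assms(2) and sg = assms(1)
  define \<phi> where "\<phi> = normal_density 0 \<sigma>0"
  define c where "c = (\<lambda>t. \<sigma>\<epsilon> / (pi * (\<sigma>\<epsilon>^2 + t^2)))"
  have cd: "cauchy_density 0 \<sigma>\<epsilon> = c" using s0 by (auto simp: c_def cauchy_eq)
  have c_meas[measurable]: "c \<in> borel_measurable borel" unfolding c_def by measurable
  have phi_meas[measurable]: "\<phi> \<in> borel_measurable borel" unfolding \<phi>_def by simp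
  have c_nn: "c t \<ge> 0" for t unfolding c_def using s0 by (simp add: add_pos_nonneg less_imp_le)
  have c_le: "c t \<le> 1 / (pi * \<sigma>\<epsilon>)" for t unfolding c_def using c_bound[OF s0] .
  have phi_nn: "\<phi> t \<ge> 0" for t unfolding \<phi>_def by simp
  have int_phi: "integrable lborel \<phi>" unfolding \<phi>_def using integrable_normal_density[OF sg] .
  have int_phiu: "integrable lborel (\<lambda>u. \<phi> u * u)" unfolding \<phi>_def using integrable_normal_moment_nz_1[OF sg] .
  define D where "D y = (\<integral>u. \<phi> u * c (y - u) \<partial>lborel)" for y
  define N where "N y = (\<integral>u. u * \<phi> u * c (y - u) \<partial>lborel)" for y
  have intD: "integrable lborel (\<lambda>u. \<phi> u * c (y - u))" for y
  proof (rule Bochner_Integration.integrable_bound[where f="\<lambda>u. \<phi> u * (1 / (pi * \<sigma>\<epsilon>))"])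
    show "integrable lborel (\<lambda>u. \<phi> u * (1 / (pi * \<sigma>\<epsilon>)))" using int_phi by simp
    show "(\<lambda>u. \<phi> u * c (y - u)) \<in> borel_measurable lborel" by measurable
    show "AE u in lborel. norm (\<phi> u * c (y - u)) \<le> norm (\<phi> u * (1 / (pi * \<sigma>\<epsilon>)))"
    proof (rule AE_I2)
      fix u
      have "\<phi> u * c (y - u) \<le> \<phi> u * (1 / (pi * \<sigma>\<epsilon>))" by (rule mult_left_mono[OF c_le phi_nn])
      moreover have "0 \<le> \<phi> u * c (y - u)" using phi_nn c_nn by simp
      ultimately show "norm (\<phi> u * c (y - u)) \<le> norm (\<phi> u * (1 / (pi * \<sigma>\<epsilon>)))"
        using phi_nn[of u] s0 by (simp add: abs_mult)
    qed
  qed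
  have intN: "integrable lborel (\<lambda>u. u * \<phi> u * c (y - u))" for y
  proof (rule Bochner_Integration.integrable_bound[where f="\<lambda>u. \<phi> u * u * (1 / (pi * \<sigma>\<epsilon>))"])
    show "integrable lborel (\<lambda>u. \<phi> u * u * (1 / (pi * \<sigma>\<epsilon>)))" using int_phiu by simp
    show "(\<lambda>u. u * \<phi> u * c (y - u)) \<in> borel_measurable lborel" by measurable
    show "AE u in lborel. norm (u * \<phi> u * c (y - u)) \<le> norm (\<phi> u * u * (1 / (pi * \<sigma>\<epsilon>)))"
    proof (rule AE_I2)
      fix u
      have "\<bar>u\<bar> * \<phi> u * c (y - u) \<le> \<bar>u\<bar> * \<phi> u * (1 / (pi * \<sigma>\<epsilon>))"
        using phi_nn by (intro mult_left_mono[OF c_le]) simp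
      moreover have "norm (u * \<phi> u * c (y - u)) = \<bar>u\<bar> * \<phi> u * c (y - u)" using phi_nn c_nn by (simp add: abs_mult)
      moreover have "norm (\<phi> u * u * (1 / (pi * \<sigma>\<epsilon>))) = \<bar>u\<bar> * \<phi> u * (1 / (pi * \<sigma>\<epsilon>))" using phi_nn s0 by (simp add: abs_mult)
      ultimately show "norm (u * \<phi> u * c (y - u)) \<le> norm (\<phi> u * u * (1 / (pi * \<sigma>\<epsilon>)))" by simp
    qed
  qed
  have shift: "posterior_mean (normal_density \<theta>0 \<sigma>0) (cauchy_density 0 \<sigma>\<epsilon>) (\<theta>0 + y) - \<theta>0 = N y / D y"
    if Dnz: "D y \<noteq> 0" for y
  proof -
    have nd: "normal_density \<theta>0 \<sigma>0 (\<theta>0 + u) = \<phi> u" for u unfolding \<phi>_def normal_density_def by simp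
    have num: "(\<integral>\<theta>. \<theta> * normal_density \<theta>0 \<sigma>0 \<theta> * cauchy_density 0 \<sigma>\<epsilon> (\<theta>0 + y - \<theta>) \<partial>lborel)
        = (\<integral>u. (\<theta>0 + u) * \<phi> u * c (y - u) \<partial>lborel)"
      by (subst lborel_integral_real_affine[where c=1 and t=\<theta>0]) (simp_all add: cd nd)
    have den: "(\<integral>\<theta>. normal_density \<theta>0 \<sigma>0 \<theta> * cauchy_density 0 \<sigma>\<epsilon> (\<theta>0 + y - \<theta>) \<partial>lborel)
        = D y"
      unfolding D_def by (subst lborel_integral_real_affine[where c=1 and t=\<theta>0]) (simp_all add: cd nd)
    have "(\<integral>u. (\<theta>0 + u) * \<phi> u * c (y - u) \<partial>lborel) = (\<integral>u. \<theta>0 * (\<phi> u * c (y - u)) + u * \<phi> u * c (y - u) \<partial>lborel)"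
      by (rule Bochner_Integration.integral_cong) (auto simp: algebra_simps)
    also have "\<dots> = \<theta>0 * D y + N y"
      unfolding D_def N_def
      by (subst Bochner_Integration.integral_add[OF integrable_mult_right[OF intD] intN]) simp
    finally have "posterior_mean (normal_density \<theta>0 \<sigma>0) (cauchy_density 0 \<sigma>\<epsilon>) (\<theta>0 + y) = (\<theta>0 * D y + N y) / D y"
      unfolding posterior_mean_def num den by simp
    then show ?thesis using Dnz by (simp add: field_simps)
  qed
  have LD: "((\<lambda>y. y^2 * D y) \<longlongrightarrow> \<sigma>\<epsilon> / pi) at_top"
  proof -
    have e: "y^2 * D y = (\<integral>u. \<phi> u * (y^2 * c (y - u)) \<partial>lborel)" for y
    proof -
      have "(\<integral>u. \<phi> u * (y^2 * c (y - u)) \<partial>lborel) = (\<integral>u. y^2 * (\<phi> u * c (y - u)) \<partial>lborel)"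
        by (rule Bochner_Integration.integral_cong) (auto simp: algebra_simps)
      also have "\<dots> = y^2 * D y" unfolding D_def by (rule integral_mult_right_zero)
      finally show ?thesis by simp
    qed
    have lim: "((\<lambda>y. \<integral>u. \<phi> u * (y^2 * c (y - u)) \<partial>lborel) \<longlongrightarrow> (\<integral>u. \<phi> u * (\<sigma>\<epsilon> / pi) \<partial>lborel)) at_top"
    proof (rule integral_dominated_convergence_at_top[where w="\<lambda>u. \<phi> u * (2 / (pi * \<sigma>\<epsilon>) * ((1 + 0 * u^2 + 0 * u^4) * (\<sigma>\<epsilon>^2 + u^2)))"])
      show "(\<lambda>u. \<phi> u * (\<sigma>\<epsilon> / pi)) \<in> borel_measurable lborel" by measurable
      show "(\<lambda>u. \<phi> u * (t^2 * c (t - u))) \<in> borel_measurable lborel" for t by measurable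
      show "integrable lborel (\<lambda>u. \<phi> u * (2 / (pi * \<sigma>\<epsilon>) * ((1 + 0 * u^2 + 0 * u^4) * (\<sigma>\<epsilon>^2 + u^2))))"
        unfolding \<phi>_def by (rule intpoly[OF sg])
      show "AE u in lborel. ((\<lambda>t. \<phi> u * (t^2 * c (t - u))) \<longlongrightarrow> \<phi> u * (\<sigma>\<epsilon> / pi)) at_top"
        unfolding c_def by (intro AE_I2 tendsto_mult_left lim1[OF s0])
      show "\<forall>\<^sub>F t in at_top. AE u in lborel. norm (\<phi> u * (t^2 * c (t - u))) \<le> \<phi> u * (2 / (pi * \<sigma>\<epsilon>) * ((1 + 0 * u^2 + 0 * u^4) * (\<sigma>\<epsilon>^2 + u^2)))"
      proof (intro always_eventually allI AE_I2)
        fix t u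
        have "norm (\<phi> u * (t^2 * c (t - u))) = \<phi> u * (t^2 * c (t - u))"
          using phi_nn c_nn by (simp add: abs_mult)
        also have "\<dots> \<le> \<phi> u * (2 * (\<sigma>\<epsilon>^2 + u^2) / (pi * \<sigma>\<epsilon>))"
          unfolding c_def using b1'[OF s0, of t u] phi_nn by (intro mult_left_mono) auto
        also have "\<dots> = \<phi> u * (2 / (pi * \<sigma>\<epsilon>) * ((1 + 0 * u^2 + 0 * u^4) * (\<sigma>\<epsilon>^2 + u^2)))" by simp
        finally show "norm (\<phi> u * (t^2 * c (t - u))) \<le> \<phi> u * (2 / (pi * \<sigma>\<epsilon>) * ((1 + 0 * u^2 + 0 * u^4) * (\<sigma>\<epsilon>^2 + u^2)))" .
      qed
    qed
    have val: "(\<integral>u. \<phi> u * (\<sigma>\<epsilon> / pi) \<partial>lborel) = \<sigma>\<epsilon> / pi"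
      unfolding \<phi>_def using integral_normal_density[OF sg] by simp
    from lim[unfolded val] show ?thesis by (simp only: e)
  qed
  have LN: "((\<lambda>y. y^3 * N y) \<longlongrightarrow> 2 * \<sigma>\<epsilon> * \<sigma>0^2 / pi) at_top"
  proof -
    have z: "(\<integral>u. \<phi> u * u \<partial>lborel) = 0" unfolding \<phi>_def using integral_normal_moment_nz_1[OF sg, of 0] .
    have e: "y^3 * N y = (\<integral>u. \<phi> u * (u * (y^3 * (c (y - u) - c y))) \<partial>lborel)" for y
    proof -
      have "(\<integral>u. \<phi> u * (u * (c (y - u) - c y)) \<partial>lborel) = (\<integral>u. u * \<phi> u * c (y - u) - c y * (\<phi> u * u) \<partial>lborel)"
        by (rule Bochner_Integration.integral_cong) (auto simp: algebra_simps)
      also have "\<dots> = N y - c y * (\<integral>u. \<phi> u * u \<partial>lborel)"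
        unfolding N_def
        by (subst Bochner_Integration.integral_diff[OF intN integrable_mult_right[OF int_phiu]]) simp
      also have "\<dots> = N y" using z by simp
      finally have "N y = (\<integral>u. \<phi> u * (u * (c (y - u) - c y)) \<partial>lborel)" by simp
      hence "y^3 * N y = (\<integral>u. y^3 * (\<phi> u * (u * (c (y - u) - c y))) \<partial>lborel)" by simp
      also have "\<dots> = (\<integral>u. \<phi> u * (u * (y^3 * (c (y - u) - c y))) \<partial>lborel)"
        by (rule Bochner_Integration.integral_cong) (auto simp: algebra_simps)
      finally show ?thesis .
    qed
    have lim: "((\<lambda>y. \<integral>u. \<phi> u * (u * (y^3 * (c (y - u) - c y))) \<partial>lborel) \<longlongrightarrow> (\<integral>u. \<phi> u * (u * (2 * u * \<sigma>\<epsilon> / pi)) \<partial>lborel)) at_top"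
    proof (rule integral_dominated_convergence_at_top[where w="\<lambda>u. \<phi> u * (2 / (pi * \<sigma>\<epsilon>) * ((0 + 3 * u^2 + 1 * u^4) * (\<sigma>\<epsilon>^2 + u^2)))"])
      show "(\<lambda>u. \<phi> u * (u * (2 * u * \<sigma>\<epsilon> / pi))) \<in> borel_measurable lborel" by measurable
      show "(\<lambda>u. \<phi> u * (u * (t^3 * (c (t - u) - c t)))) \<in> borel_measurable lborel" for t by measurable
      show "integrable lborel (\<lambda>u. \<phi> u * (2 / (pi * \<sigma>\<epsilon>) * ((0 + 3 * u^2 + 1 * u^4) * (\<sigma>\<epsilon>^2 + u^2))))"
        unfolding \<phi>_def by (rule intpoly[OF sg])
      show "AE u in lborel. ((\<lambda>t. \<phi> u * (u * (t^3 * (c (t - u) - c t)))) \<longlongrightarrow> \<phi> u * (u * (2 * u * \<sigma>\<epsilon> / pi))) at_top"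
        unfolding c_def by (intro AE_I2 tendsto_mult_left lim2[OF s0])
      show "\<forall>\<^sub>F t in at_top. AE u in lborel. norm (\<phi> u * (u * (t^3 * (c (t - u) - c t)))) \<le> \<phi> u * (2 / (pi * \<sigma>\<epsilon>) * ((0 + 3 * u^2 + 1 * u^4) * (\<sigma>\<epsilon>^2 + u^2)))"
        using eventually_ge_at_top[of 1]
      proof eventually_elim
        case (elim t)
        show ?case
        proof (rule AE_I2)
          fix u
          have "norm (\<phi> u * (u * (t^3 * (c (t - u) - c t)))) = \<phi> u * \<bar>u * (t^3 * (c (t - u) - c t))\<bar>"
            using phi_nn by (simp add: abs_mult)
          also have "\<dots> \<le> \<phi> u * (2 / (pi * \<sigma>\<epsilon>) * ((3 * u^2 + u^4) * (\<sigma>\<epsilon>^2 + u^2)))"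
            unfolding c_def using b2[OF s0 elim, of u] phi_nn by (intro mult_left_mono) auto
          finally show "norm (\<phi> u * (u * (t^3 * (c (t - u) - c t)))) \<le> \<phi> u * (2 / (pi * \<sigma>\<epsilon>) * ((0 + 3 * u^2 + 1 * u^4) * (\<sigma>\<epsilon>^2 + u^2)))" by simp
        qed
      qed
    qed
    have val: "(\<integral>u. \<phi> u * (u * (2 * u * \<sigma>\<epsilon> / pi)) \<partial>lborel) = 2 * \<sigma>\<epsilon> * \<sigma>0^2 / pi"
    proof -
      have m2: "(\<integral>u. \<phi> u * u^2 \<partial>lborel) = \<sigma>0^2"
      proof -
        have h: "(\<integral>x. normal_density 0 \<sigma>0 x * (x - 0)^(2*1) \<partial>lborel) = fact (2 * 1) / ((2 / \<sigma>0\<^sup>2)^1 * fact 1)"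
          by (rule integral_normal_moment_even[OF sg])
        have f: "(\<lambda>x. normal_density 0 \<sigma>0 x * (x - 0)^(2*1)) = (\<lambda>u. \<phi> u * u^2)" by (simp add: \<phi>_def)
        have v: "fact (2 * 1) / ((2 / \<sigma>0\<^sup>2)^1 * fact 1) = (\<sigma>0^2::real)" using sg by simp
        show ?thesis using h unfolding f v .
      qed
      have "(\<integral>u. \<phi> u * (u * (2 * u * \<sigma>\<epsilon> / pi)) \<partial>lborel) = (\<integral>u. (2 * \<sigma>\<epsilon> / pi) * (\<phi> u * u^2) \<partial>lborel)"
        by (rule Bochner_Integration.integral_cong) (auto simp: algebra_simps power2_eq_square)
      also have "\<dots> = (2 * \<sigma>\<epsilon> / pi) * \<sigma>0^2" using m2 by (simp only: integral_mult_right_zero)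
      finally show ?thesis by simp
    qed
    from lim[unfolded val] show ?thesis by (simp only: e)
  qed
  have pos: "0 < \<sigma>\<epsilon> / pi" using s0 by simp
  have ev: "\<forall>\<^sub>F y in at_top. (y^3 * N y) / (y^2 * D y) = y * (posterior_mean (normal_density \<theta>0 \<sigma>0) (cauchy_density 0 \<sigma>\<epsilon>) (\<theta>0 + y) - \<theta>0)"
    using order_tendstoD(1)[OF LD pos] eventually_gt_at_top[of 0]
  proof eventually_elim
    case (elim y)
    hence Dnz: "D y \<noteq> 0" by auto
    show ?case unfolding shift[OF Dnz] using elim Dnz by (simp add: field_simps power2_eq_square power3_eq_cube)
  qed
  have "((\<lambda>y. (y^3 * N y) / (y^2 * D y)) \<longlongrightarrow> (2 * \<sigma>\<epsilon> * \<sigma>0^2 / pi) / (\<sigma>\<epsilon> / pi)) at_top"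
    by (rule tendsto_divide[OF LN LD]) (use s0 in simp)
  moreover have "(2 * \<sigma>\<epsilon> * \<sigma>0^2 / pi) / (\<sigma>\<epsilon> / pi) = 2 * \<sigma>0^2" using s0 by (simp add: field_simps)
  ultimately show ?thesis using tendsto_cong[OF ev] by simp
qed
end
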